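(* Let $S$ be a set and let $d : S \times S \to \{0,1\}$ be a function satisfying, for all $x, x', x'' \in S$: $d(x,x) = 0$, $d(x,x') = d(x',x)$, and $d(x,x'') \le d(x,x') + d(x',x'')$. For a finite sequence $(x_1, \ldots, x_n)$ of elements of $S$ (repetitions allowed), $n \ge 1$, define its discrete uniqueness \[ U_d(x_1,\ldots,x_n) \coloneqq \frac{1}{n}\sum_{i=1}^{n} I\!\left(\bigwedge_{j=1}^{i-1} \bigl(d(x_i,x_j) \neq 0\bigr)\right), \] where $I$ of a proposition is $1$ if the proposition is true and $0$ otherwise (the empty conjunction, for $i=1$, is true). Then for every permutation $\sigma$ of $\{1,\ldots,n\}$, \[ U_d(x_{\sigma(1)},\ldots,x_{\sigma(n)}) = U_d(x_1,\ldots,x_n). \]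
   Context: In the paper, $S$ is a space of crystals, $(x_1,\ldots,x_n)$ is the list of generated samples in generation order, and $d$ is a discrete (0/1-valued) crystal distance function; the theorem states that discrete uniqueness defined via such a $d$ that is a genuine pseudometric is invariant under permutation of the generated samples. *)

theory Defs
  imports Complex_Main "HOL-Combinatorics.Permutations"
begin

definition discrete_uniqueness :: "('a \<Rightarrow> 'a \<Rightarrow> nat) \<Rightarrow> 'a list \<Rightarrow> real" where
  "discrete_uniqueness d xs =
     (1 / real (length xs)) *
     (\<Sum>i<length xs. (if (\<forall>j<i. d (xs ! i) (xs ! j) \<noteq> 0) then 1 else 0))"

end

theory Submission
  imports Defs
begin

lemma count_classes:
  fixes S :: "'a set" and d :: "'a \<Rightarrow> 'a \<Rightarrow> nat"
  assumes d_refl: "\<forall>x\<in>S. d x x = 0"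
    and d_sym: "\<forall>x\<in>S. \<forall>y\<in>S. d x y = d y x"
    and d_tri: "\<forall>x\<in>S. \<forall>y\<in>S. \<forall>z\<in>S. d x z \<le> d x y + d y z"
  shows "set xs \<subseteq> S \<Longrightarrow> (\<Sum>i<length xs. (if (\<forall>j<i. d (xs ! i) (xs ! j) \<noteq> 0) then 1 else 0) :: real)
     = real (card ((\<lambda>x. {y\<in>S. d x y = 0}) ` set xs))"
proof (induction xs rule: rev_induct)
  case Nil
  then show ?case by simp
next
  case (snoc x xs)
  let ?c = "\<lambda>x. {y\<in>S. d x y = 0}"
  have xS: "x \<in> S" and xsS: "set xs \<subseteq> S" using snoc.prems by auto
  have ceq: "?c a = ?c b \<longleftrightarrow> d a b = 0" if "a \<in> S" "b \<in> S" for a b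
  proof
    assume "?c a = ?c b"
    then have "b \<in> ?c a" using that d_refl by auto
    then show "d a b = 0" by simp
  next
    assume h: "d a b = 0"
    have "d a y = 0 \<longleftrightarrow> d b y = 0" if "y \<in> S" for y
      using d_tri d_sym h that \<open>a \<in> S\<close> \<open>b \<in> S\<close>
      by (metis add_0 le_zero_eq)
    then show "?c a = ?c b" by auto
  qed
  have sum_eq: "(\<Sum>i<length xs. (if (\<forall>j<i. d ((xs@[x]) ! i) ((xs@[x]) ! j) \<noteq> 0) then 1 else 0) :: real)
     = (\<Sum>i<length xs. (if (\<forall>j<i. d (xs ! i) (xs ! j) \<noteq> 0) then 1 else 0))"
    by (rule sum.cong) (auto simp: nth_append)
  have last: "(\<forall>j<length xs. d ((xs@[x]) ! length xs) ((xs@[x]) ! j) \<noteq> 0) \<longleftrightarrow> ?c x \<notin> ?c ` set xs"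
  proof -
    have "(\<forall>j<length xs. d ((xs@[x]) ! length xs) ((xs@[x]) ! j) \<noteq> 0) \<longleftrightarrow> (\<forall>y\<in>set xs. d x y \<noteq> 0)"
      proof
      assume h: "\<forall>j<length xs. d ((xs@[x]) ! length xs) ((xs@[x]) ! j) \<noteq> 0"
      show "\<forall>y\<in>set xs. d x y \<noteq> 0"
      proof
        fix y assume "y \<in> set xs"
        then obtain j where "j < length xs" "y = xs ! j" by (auto simp: in_set_conv_nth)
        then show "d x y \<noteq> 0" using h[rule_format, of j] by (simp add: nth_append)
      qed
    qed (simp add: nth_append)
    also have "\<dots> \<longleftrightarrow> ?c x \<notin> ?c ` set xs"
      proof
      assume h: "\<forall>y\<in>set xs. d x y \<noteq> 0"
      show "?c x \<notin> ?c ` set xs"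
      proof
        assume "?c x \<in> ?c ` set xs"
        then obtain y where "y \<in> set xs" "?c x = ?c y" by blast
        moreover have "y \<in> S" using \<open>y \<in> set xs\<close> xsS by auto
        ultimately have "d x y = 0" using ceq[of x y] xS by blast
        then show False using h \<open>y \<in> set xs\<close> by blast
      qed
    next
      assume h: "?c x \<notin> ?c ` set xs"
      show "\<forall>y\<in>set xs. d x y \<noteq> 0"
      proof
        fix y assume y: "y \<in> set xs"
        show "d x y \<noteq> 0"
        proof
          assume "d x y = 0"
          then have "?c x = ?c y" using ceq[of x y] xS xsS y by auto
          then show False using h y by blast
        qed
      qed
    qed
    finally show ?thesis .
  qed
  have "(\<Sum>i<length (xs@[x]). (if (\<forall>j<i. d ((xs@[x]) ! i) ((xs@[x]) ! j) \<noteq> 0) then 1 else 0) :: real)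
     = (\<Sum>i<length xs. (if (\<forall>j<i. d (xs ! i) (xs ! j) \<noteq> 0) then 1 else 0))
       + (if ?c x \<notin> ?c ` set xs then 1 else 0)"
    using sum_eq last by simp
  also have "\<dots> = real (card (?c ` set xs)) + (if ?c x \<notin> ?c ` set xs then 1 else 0)"
    using snoc.IH xsS by simp
  also have "\<dots> = real (card (?c ` set (xs@[x])))"
    by (simp add: card_insert_if)
  finally show ?case .
qed

theorem mainTheorem1:
  fixes S :: "'a set" and d :: "'a \<Rightarrow> 'a \<Rightarrow> nat" and xs :: "'a list" and \<sigma> :: "nat \<Rightarrow> nat"
  assumes d_range: "\<forall>x\<in>S. \<forall>y\<in>S. d x y \<in> {0, 1}"
    and d_refl: "\<forall>x\<in>S. d x x = 0"
    and d_sym: "\<forall>x\<in>S. \<forall>y\<in>S. d x y = d y x"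
    and d_tri: "\<forall>x\<in>S. \<forall>y\<in>S. \<forall>z\<in>S. d x z \<le> d x y + d y z"
    and xs_in: "set xs \<subseteq> S"
    and n_pos: "length xs \<ge> 1"
    and perm: "\<sigma> permutes {..<length xs}"
  shows "discrete_uniqueness d (map (\<lambda>i. xs ! \<sigma> i) [0..<length xs]) = discrete_uniqueness d xs"
proof -
  let ?ys = "map (\<lambda>i. xs ! \<sigma> i) [0..<length xs]"
  have "set ?ys = (\<lambda>i. xs ! i) ` (\<sigma> ` {..<length xs})"
    by (auto simp: image_image)
  also have "\<dots> = set xs"
    using permutes_image[OF perm] by (auto simp: in_set_conv_nth)
  finally have set_eq: "set ?ys = set xs" .
  have len: "length ?ys = length xs" by simp
  show ?thesis
    unfolding discrete_uniqueness_def len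
    using count_classes[OF d_refl d_sym d_tri, of ?ys] count_classes[OF d_refl d_sym d_tri, of xs]
      set_eq xs_in by simp
qed

end
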